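(* Let $\alpha \in [0,1)$ and let $R$ be a total preorder on $\Omega$ such that $\mathcal{F}(\Omega(\mathbf{x}, R), \alpha)$ is nonempty for every $\mathbf{x} \in \Omega$. Then the pessimal bound $B_R^*$ is consistent with $R$.
   Context: Fix integers $m \ge 2$, $n \ge 1$ and reals $S_{\min} < S_{\max}$; $S = \{S_0,\dots,S_{m-1}\}$ with $S_k = S_{\min} + k\frac{S_{\max}-S_{\min}}{m-1}$. $\mathcal{F}$ is the set of probability distributions on $S$, identified with the probability simplex in $\mathbb{R}^m$ with the Euclidean topology; $E[F]$ is the mean. $\Omega$ is the set of samples of size $n$ from $S$, identified with their sorted versions $x_{(1)} \le \dots \le x_{(n)}$. $P_F[\Omega']$ is the probability that the sorted sample of $n$ i.i.d. draws from $F$ lies in $\Omega' \subseteq \Omega$. $\mathcal{G}(\Omega',\alpha) = \{F : P_F[\Omega'] > \alpha\}$ and $\mathcal{F}(\Omega',\alpha)$ is its closure. A total preorder $R$ on $\Omega$ is a reflexive transitive total relation $\lesssim_R$; $\mathbf{x} \sim_R \mathbf{y}$ means both $\mathbf{x}\lesssim_R\mathbf{y}$ and $\mathbf{y}\lesssim_R\mathbf{x}$, and $\mathbf{x} <_R \mathbf{y}$ means $\mathbf{x}\lesssim_R\mathbf{y}$ but not $\mathbf{x}\sim_R\mathbf{y}$; a total order is a total preorder whose equivalence classes are singletons. The upper set is $\Omega(\mathbf{x}, R) = \{\mathbf{y} \in \Omega : \mathbf{x} \lesssim_R \mathbf{y}\}$. The pessimal bound is $B_R^*(\mathbf{x}) =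 \min\{E[F] : F \in \mathcal{F}(\Omega(\mathbf{x},R),\alpha)\}$. A bound $B:\Omega\to\mathbb{R}$ is consistent with a total order $T$ if $\mathbf{x} \le_T \mathbf{y}$ implies $B(\mathbf{x}) \le B(\mathbf{y})$; a total order $T$ agrees with $R$ if $\mathbf{x} <_R \mathbf{y}$ implies $\mathbf{x} <_T \mathbf{y}$; $B$ is consistent with $R$ if it is consistent with every total order agreeing with $R$. *)

theory Defs
  imports "HOL-Analysis.Analysis"
begin

definition Sval :: "nat \<Rightarrow> real \<Rightarrow> real \<Rightarrow> nat \<Rightarrow> real" where
  "Sval m Smin Smax k = Smin + real k * (Smax - Smin) / real (m - 1)"

definition Ssupp :: "nat \<Rightarrow> real \<Rightarrow> real \<Rightarrow> real set" where
  "Ssupp m Smin Smax = Sval m Smin Smax ` {..<m}"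

text \<open>Distributions on S: F is given by its weights p k = F({S_k}) for k < m,
  and p k = 0 for k >= m (so the set is a copy of the dist_simplex in R^m;
  the product topology on nat => real restricts to the Euclidean one on it).\<close>
definition dist_simplex :: "nat \<Rightarrow> (nat \<Rightarrow> real) set" where
  "dist_simplex m = {p. (\<forall>k<m. 0 \<le> p k) \<and> (\<forall>k. m \<le> k \<longrightarrow> p k = 0) \<and> (\<Sum>k<m. p k) = 1}"

definition mean :: "nat \<Rightarrow> real \<Rightarrow> real \<Rightarrow> (nat \<Rightarrow> real) \<Rightarrow> real" where
  "mean m Smin Smax p = (\<Sum>k<m. p k * Sval m Smin Smax k)"

text \<open>Omega: samples of size n from S, identified with their sorted versions.\<close>
definition samples :: "nat \<Rightarrow> nat \<Rightarrow> real \<Rightarrow> real \<Rightarrow> real list set" where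
  "samples m n Smin Smax = {xs. length xs = n \<and> sorted xs \<and> set xs \<subseteq> Ssupp m Smin Smax}"

text \<open>Ordered i.i.d. draws, recorded by the indices of the drawn support points.\<close>
definition draws :: "nat \<Rightarrow> nat \<Rightarrow> nat list set" where
  "draws m n = {ks. length ks = n \<and> set ks \<subseteq> {..<m}}"

definition prob_sample :: "nat \<Rightarrow> nat \<Rightarrow> real \<Rightarrow> real \<Rightarrow> (nat \<Rightarrow> real) \<Rightarrow> real list set \<Rightarrow> real" where
  "prob_sample m n Smin Smax p \<Omega>' =
     (\<Sum>ks \<in> {ks \<in> draws m n. sort (map (Sval m Smin Smax) ks) \<in> \<Omega>'}. prod_list (map p ks))"

definition Gset :: "nat \<Rightarrow> nat \<Rightarrow> real \<Rightarrow> real \<Rightarrow> real list set \<Rightarrow> real \<Rightarrow> (nat \<Rightarrow> real) set" where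
  "Gset m n Smin Smax \<Omega>' \<alpha> = {p \<in> dist_simplex m. prob_sample m n Smin Smax p \<Omega>' > \<alpha>}"

definition Fset :: "nat \<Rightarrow> nat \<Rightarrow> real \<Rightarrow> real \<Rightarrow> real list set \<Rightarrow> real \<Rightarrow> (nat \<Rightarrow> real) set" where
  "Fset m n Smin Smax \<Omega>' \<alpha> = closure (Gset m n Smin Smax \<Omega>' \<alpha>)"

definition total_preorder_on :: "'a set \<Rightarrow> 'a rel \<Rightarrow> bool" where
  "total_preorder_on A R \<longleftrightarrow>
     (\<forall>x\<in>A. (x, x) \<in> R) \<and>
     (\<forall>x\<in>A. \<forall>y\<in>A. \<forall>z\<in>A. (x, y) \<in> R \<longrightarrow> (y, z) \<in> R \<longrightarrow> (x, z) \<in> R) \<and>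
     (\<forall>x\<in>A. \<forall>y\<in>A. (x, y) \<in> R \<or> (y, x) \<in> R)"

definition total_order_on :: "'a set \<Rightarrow> 'a rel \<Rightarrow> bool" where
  "total_order_on A T \<longleftrightarrow> total_preorder_on A T \<and>
     (\<forall>x\<in>A. \<forall>y\<in>A. (x, y) \<in> T \<longrightarrow> (y, x) \<in> T \<longrightarrow> x = y)"

definition strict_of :: "'a rel \<Rightarrow> 'a \<Rightarrow> 'a \<Rightarrow> bool" where
  "strict_of R x y \<longleftrightarrow> (x, y) \<in> R \<and> (y, x) \<notin> R"

definition upset :: "'a set \<Rightarrow> 'a rel \<Rightarrow> 'a \<Rightarrow> 'a set" where
  "upset A R x = {y \<in> A. (x, y) \<in> R}"

definition pessimal :: "nat \<Rightarrow> nat \<Rightarrow> real \<Rightarrow> real \<Rightarrow> real \<Rightarrow> real list rel \<Rightarrow> real list \<Rightarrow> real" where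
  "pessimal m n Smin Smax \<alpha> R x =
     Inf (mean m Smin Smax ` Fset m n Smin Smax (upset (samples m n Smin Smax) R x) \<alpha>)"

definition consistent_with_order :: "'a set \<Rightarrow> ('a \<Rightarrow> real) \<Rightarrow> 'a rel \<Rightarrow> bool" where
  "consistent_with_order A B T \<longleftrightarrow> (\<forall>x\<in>A. \<forall>y\<in>A. (x, y) \<in> T \<longrightarrow> B x \<le> B y)"

definition agrees_with :: "'a set \<Rightarrow> 'a rel \<Rightarrow> 'a rel \<Rightarrow> bool" where
  "agrees_with A T R \<longleftrightarrow> (\<forall>x\<in>A. \<forall>y\<in>A. strict_of R x y \<longrightarrow> strict_of T x y)"

definition consistent_with_preorder :: "'a set \<Rightarrow> ('a \<Rightarrow> real) \<Rightarrow> 'a rel \<Rightarrow> bool" where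
  "consistent_with_preorder A B R \<longleftrightarrow>
     (\<forall>T. total_order_on A T \<longrightarrow> agrees_with A T R \<longrightarrow> consistent_with_order A B T)"

end

theory Submission
  imports Defs
begin

lemma mean_cont: "continuous_on UNIV (mean m Smin Smax)"
  unfolding mean_def
  by (intro continuous_intros continuous_on_product_coordinates)

lemma Fset_mono:
  assumes "A \<subseteq> B"
  shows "Fset m n Smin Smax A \<alpha> \<subseteq> Fset m n Smin Smax B \<alpha>"
proof -
  have "Gset m n Smin Smax A \<alpha> \<subseteq> Gset m n Smin Smax B \<alpha>"
  proof
    fix p assume p: "p \<in> Gset m n Smin Smax A \<alpha>"
    hence ps: "p \<in> dist_simplex m" by (simp add: Gset_def)
    have fin: "finite (draws m n)"
    proof -
      have "draws m n \<subseteq> {ks. set ks \<subseteq> {..<m} \<and> length ks = n}" by (auto simp: draws_def)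
      thus ?thesis using finite_lists_length_eq[of "{..<m}" n] finite_subset by blast
    qed
    have "prob_sample m n Smin Smax p A \<le> prob_sample m n Smin Smax p B"
      unfolding prob_sample_def
    proof (rule sum_mono2)
      show "finite {ks \<in> draws m n. sort (map (Sval m Smin Smax) ks) \<in> B}" using fin by simp
      show "{ks \<in> draws m n. sort (map (Sval m Smin Smax) ks) \<in> A}
          \<subseteq> {ks \<in> draws m n. sort (map (Sval m Smin Smax) ks) \<in> B}" using assms by auto
      fix ks assume "ks \<in> {ks \<in> draws m n. sort (map (Sval m Smin Smax) ks) \<in> B} -
          {ks \<in> draws m n. sort (map (Sval m Smin Smax) ks) \<in> A}"
      hence "set ks \<subseteq> {..<m}" by (auto simp: draws_def)
      hence "\<forall>x\<in>set ks. 0 \<le> p x" using ps by (auto simp: dist_simplex_def)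
      thus "0 \<le> prod_list (map p ks)" by (induct ks) auto
    qed
    thus "p \<in> Gset m n Smin Smax B \<alpha>" using p by (auto simp: Gset_def)
  qed
  thus ?thesis unfolding Fset_def by (rule closure_mono)
qed

lemma Fset_bdd:
  assumes "m \<ge> 2" "Smin < Smax"
  shows "bdd_below (mean m Smin Smax ` Fset m n Smin Smax A \<alpha>)"
proof -
  have "Gset m n Smin Smax A \<alpha> \<subseteq> {p. Smin \<le> mean m Smin Smax p}"
  proof
    fix p assume "p \<in> Gset m n Smin Smax A \<alpha>"
    hence ps: "p \<in> dist_simplex m" by (simp add: Gset_def)
    have "Smin = (\<Sum>k<m. p k * Smin)" using ps by (simp add: dist_simplex_def sum_distrib_right[symmetric])
    also have "\<dots> \<le> (\<Sum>k<m. p k * Sval m Smin Smax k)"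
    proof (rule sum_mono)
      fix k assume "k \<in> {..<m}"
      have "Smin \<le> Sval m Smin Smax k" using assms
        by (simp add: Sval_def)
      moreover have "0 \<le> p k" using ps \<open>k \<in> {..<m}\<close> by (simp add: dist_simplex_def)
      ultimately show "p k * Smin \<le> p k * Sval m Smin Smax k" by (simp add: mult_left_mono)
    qed
    finally show "p \<in> {p. Smin \<le> mean m Smin Smax p}" by (simp add: mean_def)
  qed
  moreover have "closed {p. Smin \<le> mean m Smin Smax p}"
    by (rule closed_Collect_le) (simp_all add: mean_cont)
  ultimately have "Fset m n Smin Smax A \<alpha> \<subseteq> {p. Smin \<le> mean m Smin Smax p}"
    unfolding Fset_def by (rule closure_minimal)
  thus ?thesis by (auto simp: bdd_below_def)
qed

theorem lemma4:
  fixes m n :: nat and Smin Smax \<alpha> :: real and R :: "real list rel"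
  assumes "m \<ge> 2" and "n \<ge> 1" and "Smin < Smax"
    and "0 \<le> \<alpha>" and "\<alpha> < 1"
    and "total_preorder_on (samples m n Smin Smax) R"
    and "\<forall>x \<in> samples m n Smin Smax.
           Fset m n Smin Smax (upset (samples m n Smin Smax) R x) \<alpha> \<noteq> {}"
  shows "consistent_with_preorder (samples m n Smin Smax) (pessimal m n Smin Smax \<alpha> R) R"
  unfolding consistent_with_preorder_def consistent_with_order_def
proof (intro allI impI ballI)
  let ?A = "samples m n Smin Smax"
  fix T x y assume T: "total_order_on ?A T" and ag: "agrees_with ?A T R"
    and x: "x \<in> ?A" and y: "y \<in> ?A" and xy: "(x, y) \<in> T"
  show "pessimal m n Smin Smax \<alpha> R x \<le> pessimal m n Smin Smax \<alpha> R y"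
  proof (cases "x = y")
    case True thus ?thesis by simp
  next
    case False
    have "(x, y) \<in> R"
    proof (rule ccontr)
      assume "(x, y) \<notin> R"
      moreover have "(x, y) \<in> R \<or> (y, x) \<in> R" using assms(6) x y unfolding total_preorder_on_def by blast
      ultimately have "strict_of R y x" unfolding strict_of_def by blast
      hence "(y, x) \<in> T" "(x, y) \<notin> T" using ag x y by (auto simp: agrees_with_def strict_of_def)
      thus False using xy by simp
    qed
    have sub: "upset ?A R y \<subseteq> upset ?A R x"
    proof
      fix z assume z: "z \<in> upset ?A R y"
      hence "z \<in> ?A" "(y, z) \<in> R" by (auto simp: upset_def)
      moreover have "\<forall>a\<in>?A. \<forall>b\<in>?A. \<forall>c\<in>?A. (a, b) \<in> R \<longrightarrow> (b, c) \<in> R \<longrightarrow> (a, c) \<in> R"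
        using assms(6) unfolding total_preorder_on_def by blast
      ultimately have "(x, z) \<in> R" using x y \<open>(x, y) \<in> R\<close> by blast
      thus "z \<in> upset ?A R x" using \<open>z \<in> ?A\<close> by (simp add: upset_def)
    qed
    show ?thesis unfolding pessimal_def
      apply (rule cInf_superset_mono)
      using assms(7) y apply blast
      apply (rule Fset_bdd[OF assms(1,3)])
      using Fset_mono[OF sub] by (rule image_mono)
  qed
qed

end
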